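(* Let $P=\langle p_1,\dots,p_n\rangle$ be a set of points in convex position. For any three points $p_i,p_l,p_j\in P$ ordered counterclockwise on the convex hull of $P$, and any two points $p,q$ with $p\in P(i,l)$, $q\in P(l,j)$, and $p,q\notin D(p_i,p_l,p_j)$, we have $$|pq|\ge\min\{|pp_i|,|pp_l|,|p_ip_j|,|p_lp_j|,|p_lp_i|,|qp_l|,|qp_j|\}.$$
   Context: $P$ is in convex position (every point is a hull vertex), no three points collinear, no four cocircular, listed counterclockwise along the hull. $P(i,l)$ denotes the points of $P$ strictly between $p_i$ and $p_l$ moving counterclockwise from $p_i$ to $p_l$. $D(p_i,p_l,p_j)$ is the disk whose boundary circle passes through $p_i,p_l,p_j$. $|xy|$ is Euclidean distance. *)

theory Defs
  imports "HOL-Analysis.Analysis"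
begin

(* Points of the plane are complex numbers; P = p ` {..<n}, indices 0..n-1. *)

definition orient :: "complex \<Rightarrow> complex \<Rightarrow> complex \<Rightarrow> real" where
  "orient a b c = Im (cnj (b - a) * (c - a))"   (* > 0 iff a,b,c counterclockwise *)

definition convex_position :: "nat \<Rightarrow> (nat \<Rightarrow> complex) \<Rightarrow> bool" where
  "convex_position n p \<longleftrightarrow> inj_on p {..<n} \<and>
     (\<forall>k<n. p k \<notin> convex hull (p ` ({..<n} - {k})))"

definition ccw_listed :: "nat \<Rightarrow> (nat \<Rightarrow> complex) \<Rightarrow> bool" where
  "ccw_listed n p \<longleftrightarrow> (\<forall>i j k. i < j \<and> j < k \<and> k < n \<longrightarrow> orient (p i) (p j) (p k) > 0)"

definition no_three_collinear :: "nat \<Rightarrow> (nat \<Rightarrow> complex) \<Rightarrow> bool" where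
  "no_three_collinear n p \<longleftrightarrow>
     (\<forall>i<n. \<forall>j<n. \<forall>k<n. distinct [i,j,k] \<longrightarrow> \<not> collinear {p i, p j, p k})"

definition no_four_cocircular :: "nat \<Rightarrow> (nat \<Rightarrow> complex) \<Rightarrow> bool" where
  "no_four_cocircular n p \<longleftrightarrow>
     (\<forall>i<n. \<forall>j<n. \<forall>k<n. \<forall>m<n. distinct [i,j,k,m] \<longrightarrow>
        \<not> (\<exists>c. dist c (p i) = dist c (p j) \<and> dist c (p i) = dist c (p k) \<and> dist c (p i) = dist c (p m)))"

definition cyc_between :: "nat \<Rightarrow> nat \<Rightarrow> nat \<Rightarrow> bool" where
  "cyc_between i l m \<longleftrightarrow> (if i < l then i < m \<and> m < l else i < m \<or> m < l)"

definition Pbetween :: "nat \<Rightarrow> (nat \<Rightarrow> complex) \<Rightarrow> nat \<Rightarrow> nat \<Rightarrow> complex set" where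
  "Pbetween n p i l = p ` {m. m < n \<and> cyc_between i l m}"

definition circumcenter :: "complex \<Rightarrow> complex \<Rightarrow> complex \<Rightarrow> complex" where
  "circumcenter a b c = (THE z. dist z a = dist z b \<and> dist z a = dist z c)"

definition circdisk :: "complex \<Rightarrow> complex \<Rightarrow> complex \<Rightarrow> complex set" where
  "circdisk a b c = cball (circumcenter a b c) (dist (circumcenter a b c) a)"

end

theory Submission
  imports Defs
begin
lemma orient_alt: "orient a b c = (Re b - Re a)*(Im c - Im a) - (Im b - Im a)*(Re c - Re a)"
  by (simp add: orient_def algebra_simps)
lemma orient_cyc: "orient a b c = orient b c a"
  by (simp add: orient_alt algebra_simps)
lemma orient_swap: "orient a c b = - orient a b c"
  by (simp add: orient_alt algebra_simps)
lemma cyc3: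
  assumes "ccw_listed n p" "r < n" "s < n" "t < n" "r<s \<and> s<t \<or> s<t \<and> t<r \<or> t<r \<and> r<s"
  shows "orient (p r) (p s) (p t) > 0"
  using assms unfolding ccw_listed_def by (metis orient_cyc)
lemma dist_sq: "(dist a b)^2 = (Re a - Re b)^2 + (Im a - Im b)^2"
  by (simp add: dist_norm cmod_power2)
lemma equi_iff: "dist z a = dist z b \<longleftrightarrow>
   2*((Re z - Re a)*(Re b - Re a) + (Im z - Im a)*(Im b - Im a)) = (Re b - Re a)^2 + (Im b - Im a)^2"
proof -
  have "dist z a = dist z b \<longleftrightarrow> (dist z a)^2 = (dist z b)^2" by simp
  also have "\<dots> \<longleftrightarrow> 2*((Re z - Re a)*(Re b - Re a) + (Im z - Im a)*(Im b - Im a)) = (Re b - Re a)^2 + (Im b - Im a)^2"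
    unfolding dist_sq by (simp add: power2_eq_square algebra_simps)
  finally show ?thesis .
qed

lemma circ_prop:
  assumes "orient a b c \<noteq> 0"
  shows "dist (circumcenter a b c) a = dist (circumcenter a b c) b \<and> dist (circumcenter a b c) a = dist (circumcenter a b c) c"
proof -
  define ux where "ux = Re b - Re a"
  define uy where "uy = Im b - Im a"
  define qx where "qx = Re c - Re a"
  define qy where "qy = Im c - Im a"
  define D where "D = 2*(ux*qy - uy*qx)"
  have D: "D \<noteq> 0" using assms by (simp add: D_def orient_alt ux_def uy_def qx_def qy_def)
  define zx where "zx = ((ux^2+uy^2)*qy - (qx^2+qy^2)*uy)/D"
  define zy where "zy = ((qx^2+qy^2)*ux - (ux^2+uy^2)*qx)/D"
  define z where "z = a + Complex zx zy"
  let ?P = "\<lambda>z. dist z a = dist z b \<and> dist z a = dist z c"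
  have zxD: "zx * D = (ux^2+uy^2)*qy - (qx^2+qy^2)*uy" using D by (simp add: zx_def)
  have zyD: "zy * D = (qx^2+qy^2)*ux - (ux^2+uy^2)*qx" using D by (simp add: zy_def)
  have "2*(zx*ux + zy*uy)*D = 2*(ux*(zx*D) + uy*(zy*D))" by (simp add: algebra_simps)
  also have "\<dots> = 2*(ux*((ux^2+uy^2)*qy - (qx^2+qy^2)*uy) + uy*((qx^2+qy^2)*ux - (ux^2+uy^2)*qx))" by (simp only: zxD zyD)
  also have "\<dots> = (ux^2+uy^2)*D" unfolding D_def by (simp add: algebra_simps power2_eq_square)
  finally have f1a: "2*(zx*ux + zy*uy) = ux^2+uy^2" using D by simp
  have "2*(zx*qx + zy*qy)*D = 2*(qx*(zx*D) + qy*(zy*D))" by (simp add: algebra_simps)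
  also have "\<dots> = 2*(qx*((ux^2+uy^2)*qy - (qx^2+qy^2)*uy) + qy*((qx^2+qy^2)*ux - (ux^2+uy^2)*qx))" by (simp only: zxD zyD)
  also have "\<dots> = (qx^2+qy^2)*D" unfolding D_def by (simp add: algebra_simps power2_eq_square)
  finally have f1b: "2*(zx*qx + zy*qy) = qx^2+qy^2" using D by simp
  note f1 = f1a f1b
  have "?P z"
    unfolding equi_iff z_def using f1
    by (simp add: ux_def[symmetric] uy_def[symmetric] qx_def[symmetric] qy_def[symmetric])
  moreover have "w = z" if "?P w" for w
  proof -
    have e1: "2*((Re w - Re a)*ux + (Im w - Im a)*uy) = ux^2+uy^2"
      using that unfolding equi_iff ux_def uy_def by simp
    have e2: "2*((Re w - Re a)*qx + (Im w - Im a)*qy) = qx^2+qy^2"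
      using that unfolding equi_iff qx_def qy_def by simp
    define dx where "dx = Re w - Re a - zx"
    define dy where "dy = Im w - Im a - zy"
    have g1: "dx*ux + dy*uy = 0" "dx*qx + dy*qy = 0"
      using e1 e2 f1 by (simp_all add: dx_def dy_def algebra_simps)
    have "dx*(ux*qy - uy*qx) = qy*(dx*ux + dy*uy) - uy*(dx*qx + dy*qy)" by (simp add: algebra_simps)
    hence "dx*(ux*qy - uy*qx) = 0" using g1 by simp
    hence "dx = 0" using D by (simp add: D_def)
    have "dy*(ux*qy - uy*qx) = ux*(dx*qx + dy*qy) - qx*(dx*ux + dy*uy)" by (simp add: algebra_simps)
    hence "dy*(ux*qy - uy*qx) = 0" using g1 by simp
    hence "dy = 0" using D by (simp add: D_def)
    show "w = z" using \<open>dx = 0\<close> \<open>dy = 0\<close>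
      by (simp add: complex_eq_iff z_def dx_def dy_def)
  qed
  ultimately have "?P (THE z. ?P z)" by (rule theI)
  thus ?thesis unfolding circumcenter_def .
qed
lemma core:
  fixes X Y I L J :: complex and R :: real
  assumes hY: "Im Y = Im X" and nI: "cmod I = R" and nL: "cmod L = R" and nJ: "cmod J = R"
    and nX: "cmod X > R" and nY: "cmod Y > R"
    and sI: "Im I > Im X" and sJ: "Im J > Im X" and sL: "Im L < Im X"
    and oX: "orient I L X < 0" and oY: "orient I L Y > 0"
  shows "dist X Y \<ge> dist X L \<or> dist X Y \<ge> dist I J"
proof -
  define h where "h = Im X"
  define sx where "sx = Re X"
  define sy where "sy = Re Y"
  have R0: "R \<ge> 0" using nI by auto
  have I2: "(Re I)^2 + (Im I)^2 = R^2" using nI by (simp add: cmod_power2[symmetric])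
  have L2: "(Re L)^2 + (Im L)^2 = R^2" using nL by (simp add: cmod_power2[symmetric])
  have J2: "(Re J)^2 + (Im J)^2 = R^2" using nJ by (simp add: cmod_power2[symmetric])
  have X2: "sx^2 + h^2 > R^2"
  proof -
    have "R^2 < (cmod X)^2" using nX R0 by (simp add: power_strict_mono)
    thus ?thesis by (simp add: cmod_power2 sx_def h_def)
  qed
  have Y2: "sy^2 + h^2 > R^2"
  proof -
    have "R^2 < (cmod Y)^2" using nY R0 by (simp add: power_strict_mono)
    thus ?thesis by (simp add: cmod_power2 sy_def h_def hY)
  qed
  define t where "t = (Im I - h)/(Im I - Im L)"
  have dpos: "Im I - Im L > 0" using sI sL by simp
  have t01: "0 < t" "t < 1" using sI sL dpos by (auto simp: t_def h_def field_simps)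
  define Z where "Z = I + of_real t * (L - I)"
  have ImZ: "Im Z = h" using dpos by (simp add: Z_def t_def field_simps)
  have "Z = of_real (1-t) * I + of_real t * L" by (simp add: Z_def algebra_simps)
  hence "cmod Z \<le> (1-t) * cmod I + t * cmod L"
    using t01 by (metis abs_of_nonneg less_eq_real_def norm_of_real norm_mult norm_triangle_ineq diff_ge_0_iff_ge order_trans add_mono order_refl)
  hence "cmod Z \<le> R" using nI nL by (simp add: algebra_simps)
  hence "(cmod Z)^2 \<le> R^2" by (simp add: power_mono)
  hence Z2: "(Re Z)^2 + h^2 \<le> R^2" using ImZ by (simp add: cmod_power2)
  have oXZ: "orient I L X = (Im I - Im L) * (Re X - Re Z)"
    using dpos by (simp add: orient_alt Z_def t_def h_def field_simps)
  have oYZ: "orient I L Y = (Im I - Im L) * (Re Y - Re Z)"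
    using dpos by (simp add: orient_alt Z_def t_def h_def hY field_simps)
  have zx1: "sx < Re Z" using oX oXZ dpos by (simp add: sx_def mult_less_0_iff)
  have zy1: "Re Z < sy" using oY oYZ dpos by (simp add: sy_def zero_less_mult_iff)
  define W where "W = R^2 - h^2"
  have W0: "W \<ge> 0" using Z2 zero_le_power2[of "Re Z"] unfolding W_def by linarith
  define w where "w = sqrt W"
  have w0: "w \<ge> 0" using W0 by (simp add: w_def)
  have ww: "w^2 = W" unfolding w_def using W0 by (rule real_sqrt_pow2)
  have zw: "\<bar>Re Z\<bar> \<le> w" using Z2 W0 unfolding w_def W_def
    by (simp add: real_le_rsqrt)
  have sxw: "sx < -w"
  proof (rule ccontr)
    assume "\<not> sx < -w"
    hence "-w \<le> sx" by simp
    moreover have "sx \<le> w" using zx1 zw by simp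
    ultimately have "\<bar>sx\<bar> \<le> w" by simp
    hence "sx^2 \<le> w^2" by (metis abs_le_square_iff abs_of_nonneg w0) 
    thus False using X2 ww W_def by simp
  qed
  have syw: "sy > w"
  proof (rule ccontr)
    assume "\<not> sy > w"
    hence "sy \<le> w" by simp
    moreover have "-w \<le> sy" using zy1 zw by simp
    ultimately have "\<bar>sy\<bar> \<le> w" by simp
    hence "sy^2 \<le> w^2" by (metis abs_le_square_iff abs_of_nonneg w0) 
    thus False using Y2 ww W_def by simp
  qed
  have XY2: "(dist X Y)^2 = (sy - sx)^2" by (simp add: dist_sq sx_def sy_def hY power2_commute)
  have XYbig: "(dist X Y)^2 \<ge> 4*W"
  proof -
    have "2*w \<le> sy - sx" using sxw syw by simp
    hence "(2*w)^2 \<le> (sy - sx)^2" using w0 by (intro power_mono) auto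
    thus ?thesis using XY2 ww by (simp add: power_mult_distrib)
  qed
  show ?thesis
  proof (cases "h \<ge> 0")
    case True
    define a1 where "a1 = Re I"
    define b1 where "b1 = Im I"
    define a2 where "a2 = Re J"
    define b2 where "b2 = Im J"
    have b1h: "b1 \<ge> h" and b2h: "b2 \<ge> h" using sI sJ by (simp_all add: b1_def b2_def h_def)
    have IJ: "(dist I J)^2 = 2*R^2 - 2*a1*a2 - 2*b1*b2"
      using I2 J2 unfolding dist_sq by (simp add: a1_def a2_def b1_def b2_def power2_eq_square algebra_simps)
    have aa: "2*a1*a2 \<ge> -(a1^2 + a2^2)"
      using sum_squares_ge_zero[of "a1+a2" 0] by (simp add: power2_eq_square algebra_simps)
    have bb: "(b1+b2)^2 \<ge> (2*h)^2" using b1h b2h True by (intro power_mono) auto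
    have "(dist I J)^2 \<le> 4*W"
      using IJ aa bb I2 J2 unfolding W_def a1_def a2_def b1_def b2_def
      by (simp add: power2_eq_square algebra_simps)
    hence "(dist I J)^2 \<le> (dist X Y)^2" using XYbig by linarith
    hence "dist I J \<le> dist X Y" by (rule power2_le_imp_le) auto
    thus ?thesis by simp
  next
    case False
    define lx where "lx = Re L"
    define ly where "ly = Im L"
    have lyh: "ly < h" using sL by (simp add: ly_def h_def)
    have "(-h)^2 \<le> (-ly)^2" using lyh False by (intro power_mono) auto
    hence "h^2 \<le> ly^2" by simp
    hence "lx^2 \<le> W" using L2 by (simp add: W_def lx_def ly_def)
    hence lxw: "\<bar>lx\<bar> \<le> w" unfolding w_def by (simp add: real_le_rsqrt)
    define A where "A = lx - sx"
    define B where "B = sy - lx"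
    have A1: "A \<ge> w + lx" using sxw by (simp add: A_def)
    have B1: "B \<ge> w - lx" using syw by (simp add: B_def)
    have "A*B \<ge> (w+lx)*(w-lx)" using A1 B1 lxw by (intro mult_mono) auto
    hence AB: "A*B \<ge> W - lx^2" using ww by (simp add: algebra_simps power2_eq_square)
    define dot where "dot = (sx - lx)*(sy - lx) + (h - ly)^2"
    have "dot = -(A*B) + (h-ly)^2" by (simp add: dot_def A_def B_def algebra_simps)
    also have "\<dots> \<le> lx^2 - W + (h-ly)^2" using AB by simp
    also have "\<dots> = 2*h*(h-ly)" using L2 by (simp add: W_def lx_def ly_def power2_eq_square algebra_simps)
    also have "\<dots> \<le> 0" using False lyh by (simp add: mult_nonpos_nonneg)
    finally have dot0: "dot \<le> 0" .
    have "(dist X Y)^2 = (dist X L)^2 + (dist Y L)^2 - 2*dot"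
      unfolding dist_sq by (simp add: dot_def sx_def sy_def lx_def ly_def h_def hY power2_eq_square algebra_simps)
    hence "(dist X L)^2 \<le> (dist X Y)^2" using dot0 zero_le_power2[of "dist Y L"] by linarith
    hence "dist X L \<le> dist X Y" by (rule power2_le_imp_le) auto
    thus ?thesis by simp
  qed
qed
lemma orient_T: "orient (w*(a-c)) (w*(b-c)) (w*(d-c)) = (cmod w)^2 * orient a b d"
proof -
  have "cnj (w*(b-c) - w*(a-c)) * (w*(d-c) - w*(a-c)) = (cnj w * w) * (cnj (b-a) * (d-a))"
    by (simp add: algebra_simps)
  also have "cnj w * w = of_real ((cmod w)^2)" by (simp only: complex_norm_square mult.commute)
  finally show ?thesis unfolding orient_def by simp
qed
lemma dist_T: "cmod w = 1 \<Longrightarrow> dist (w*(a-c)) (w*(b-c)) = dist a b"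
proof -
  assume "cmod w = 1"
  have "w*(a-c) - w*(b-c) = w*(a-b)" by (simp add: algebra_simps)
  thus ?thesis using \<open>cmod w = 1\<close> by (simp add: dist_norm norm_mult)
qed
lemma norm_T: "cmod w = 1 \<Longrightarrow> cmod (w*(a-c)) = dist c a"
  by (simp add: norm_mult dist_norm norm_minus_commute)
lemma rot_setup:
  assumes "X \<noteq> Y"
  defines "w \<equiv> cnj (Y - X) / of_real (cmod (Y - X))"
  shows "cmod w = 1" "w*(Y-c) - w*(X-c) = of_real (cmod (Y-X))"
proof -
  have nz: "cmod (Y-X) \<noteq> 0" using assms by simp
  show "cmod w = 1" using nz by (simp add: w_def norm_divide del: complex_cnj_diff)
  have "w*(Y-c) - w*(X-c) = w*(Y-X)" by (simp add: algebra_simps)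
  also have "\<dots> = cnj (Y-X) * (Y-X) / of_real (cmod (Y-X))" by (simp add: w_def)
  also have "cnj (Y-X) * (Y-X) = of_real ((cmod (Y-X))^2)" by (simp only: complex_norm_square mult.commute)
  finally show "w*(Y-c) - w*(X-c) = of_real (cmod (Y-X))" using nz
    by (simp add: power2_eq_square)
qed
lemma orient_horiz:
  assumes "B - A = of_real d"
  shows "orient A B P = d * (Im P - Im A)"
  using assms by (simp add: orient_def)
theorem lemma21:
  fixes n :: nat and p :: "nat \<Rightarrow> complex" and i l j :: nat and x y :: complex
  assumes "convex_position n p"
    and "ccw_listed n p"
    and "no_three_collinear n p"
    and "no_four_cocircular n p"
    and "i < n" "l < n" "j < n"
    and "distinct [i, l, j]"
    and "cyc_between i j l"
    and "x \<in> Pbetween n p i l"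
    and "y \<in> Pbetween n p l j"
    and "x \<notin> circdisk (p i) (p l) (p j)"
    and "y \<notin> circdisk (p i) (p l) (p j)"
  shows "dist x y \<ge> Min {dist x (p i), dist x (p l), dist (p i) (p j), dist (p l) (p j),
                          dist (p l) (p i), dist y (p l), dist y (p j)}"
proof -
  obtain a where a: "a < n" "cyc_between i l a" "x = p a" using assms(10) unfolding Pbetween_def by auto
  obtain b where b: "b < n" "cyc_between l j b" "y = p b" using assms(11) unfolding Pbetween_def by auto
  note cb = a(2) b(2) assms(9) assms(8)
  have c1: "a<b \<and> b<i \<or> b<i \<and> i<a \<or> i<a \<and> a<b" using cb unfolding cyc_between_def by (auto split: if_splits)
  have c2: "a<b \<and> b<j \<or> b<j \<and> j<a \<or> j<a \<and> a<b" using cb unfolding cyc_between_def by (auto split: if_splits)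
  have c3: "a<l \<and> l<b \<or> l<b \<and> b<a \<or> b<a \<and> a<l" using cb unfolding cyc_between_def by (auto split: if_splits)
  have c4: "i<a \<and> a<l \<or> a<l \<and> l<i \<or> l<i \<and> i<a" using cb unfolding cyc_between_def by (auto split: if_splits)
  have c5: "i<l \<and> l<b \<or> l<b \<and> b<i \<or> b<i \<and> i<l" using cb unfolding cyc_between_def by (auto split: if_splits)
  have c6: "i<l \<and> l<j \<or> l<j \<and> j<i \<or> j<i \<and> i<l" using cb unfolding cyc_between_def by (auto split: if_splits)
  define X where "X = p a"
  define Y where "Y = p b"
  define I where "I = p i"
  define L where "L = p l"
  define J where "J = p j"
  have o1: "orient X Y I > 0" using cyc3[OF assms(2) a(1) b(1) assms(5) c1] by (simp add: X_def Y_def I_def)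
  have o2: "orient X Y J > 0" using cyc3[OF assms(2) a(1) b(1) assms(7) c2] by (simp add: X_def Y_def J_def)
  have o3: "orient X Y L < 0" using cyc3[OF assms(2) a(1) assms(6) b(1) c3] orient_swap[of X Y L]
    by (simp add: X_def Y_def L_def)
  have o4: "orient I L X < 0" using cyc3[OF assms(2) assms(5) a(1) assms(6) c4] orient_swap[of I L X]
    by (simp add: X_def I_def L_def)
  have o5: "orient I L Y > 0" using cyc3[OF assms(2) assms(5) assms(6) b(1) c5] by (simp add: Y_def I_def L_def)
  have o6: "orient I L J > 0" using cyc3[OF assms(2) assms(5) assms(6) assms(7) c6] by (simp add: J_def I_def L_def)
  define C where "C = circumcenter I L J"
  define R where "R = dist C I"
  have CL: "dist C L = R" and CJ: "dist C J = R" using circ_prop[of I L J] o6 by (auto simp: C_def R_def)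
  have CX: "dist C X > R" using assms(12) a(3) by (simp add: circdisk_def C_def R_def X_def I_def L_def J_def)
  have CY: "dist C Y > R" using assms(13) b(3) by (simp add: circdisk_def C_def R_def Y_def I_def L_def J_def)
  have XY: "X \<noteq> Y" using o1 by (auto simp: orient_def)
  define w where "w = cnj (Y - X) / of_real (cmod (Y - X))"
  have w1: "cmod w = 1" and wd: "w*(Y-C) - w*(X-C) = of_real (cmod (Y-X))"
    using rot_setup[OF XY] unfolding w_def by auto
  define T where "T = (\<lambda>z. w*(z - C))"
  have oT: "orient (T u) (T v) (T s) = orient u v s" for u v s
    using orient_T[of w u C v s] w1 by (simp add: T_def)
  have dT: "dist (T u) (T v) = dist u v" for u v using dist_T[OF w1] by (simp add: T_def)
  have nT: "cmod (T u) = dist C u" for u using norm_T[OF w1] by (simp add: T_def)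
  have hor: "orient (T X) (T Y) (T u) = cmod (Y-X) * (Im (T u) - Im (T X))" for u
    by (rule orient_horiz) (simp add: T_def wd)
  have dpos: "cmod (Y - X) > 0" using XY by simp
  have hY: "Im (T Y) = Im (T X)" using wd by (simp add: T_def complex_eq_iff)
  have sI: "Im (T I) > Im (T X)" using hor[of I] oT[of X Y I] o1 dpos by (simp add: zero_less_mult_iff)
  have sJ: "Im (T J) > Im (T X)" using hor[of J] oT[of X Y J] o2 dpos by (simp add: zero_less_mult_iff)
  have sL: "Im (T L) < Im (T X)" using hor[of L] oT[of X Y L] o3 dpos by (simp add: mult_less_0_iff)
  have "dist (T X) (T Y) \<ge> dist (T X) (T L) \<or> dist (T X) (T Y) \<ge> dist (T I) (T J)"
    by (rule core[where R=R]) (use hY sI sJ sL o4 o5 oT nT CL CJ CX CY R_def in auto)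
  hence "dist x y \<ge> dist x (p l) \<or> dist x y \<ge> dist (p i) (p j)"
    unfolding dT using a(3) b(3) by (simp add: X_def Y_def L_def I_def J_def)
  moreover have "Min {dist x (p i), dist x (p l), dist (p i) (p j), dist (p l) (p j),
                          dist (p l) (p i), dist y (p l), dist y (p j)} \<le> dist x (p l)"
    by (rule Min_le) auto
  moreover have "Min {dist x (p i), dist x (p l), dist (p i) (p j), dist (p l) (p j),
                          dist (p l) (p i), dist y (p l), dist y (p j)} \<le> dist (p i) (p j)"
    by (rule Min_le) auto
  ultimately show ?thesis by linarith
qed
end
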